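(* Let $N\ge1$, $R>0$, $m>1$ with $N>m$, $p>1$, $\gamma\in(0,m-1)$, $\alpha,\beta\in\mathbb R$ with $N+\alpha-m>0$ and $\beta-\alpha+1>0$. Let $a:[0,\infty)\to(0,\infty)$ be of class $C^1$ with $c_1\le a\le c_2$ for constants $0<c_1\le c_2$, and let $g:[0,\infty)\to[0,\infty)$ be of class $C^1$ and nondecreasing. Let $v\in C^1[0,R]$ be the radial profile of a positive radial solution of $$-\mathrm{div}\Big(\frac{|x|^\alpha|\nabla u|^{m-2}\nabla u}{(a(|x|)+g(u))^\gamma}\Big)=|x|^\beta u^p \ \text{in } B_R\setminus\{0\},\qquad u=0 \text{ on }\partial B_R,$$ and let $\sigma$ be a constant with $-(N+\alpha-m)<\sigma\le m-1$. Then, writing $D(r)=a(r)+g(v(r))$, $$\Big(\sigma-m+2-\frac{N+\alpha-m+1+\sigma}{m}+\frac{N+\beta+1+\sigma-m}{p+1}\Big)\int_0^R\frac{r^{N+\alpha-m+\sigma}|v'(r)|^m}{D(r)^\gamma}dr$$ $$=\frac{m-1}{m}\frac{R^{N+\alpha-m+1+\sigma}|v'(R)|^m}{(a(R)+g(0))^\gamma}-\frac{\gamma}{m}\int_0^R\frac{r^{N+\alpha-m+1+\sigma}|v'(r)|^m a'(r)}{D(r)^{\gamma+1}}dr-\frac{\gamma}{m}\int_0^R\frac{r^{N+\alpha-m+1+\sigma}|v'(r)|^m v'(r)g'(v(r))}{D(r)^{\gamma+1}}dr$$ $$-\frac{N+\beta+1+\sigma-m}{p+1}(\sigma-m+1)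\int_0^R\frac{r^{N+\alpha+\sigma-m-1}|v'(r)|^{m-2}v'(r)v(r)}{D(r)^\gamma}dr.$$
   Context: $B_R$ is the open ball of radius $R$ centered at the origin in $\mathbb R^N$. A positive radial solution is $u(x)=v(|x|)$ with $v>0$ on $[0,R)$, $v\in C^1[0,R)\cap C[0,R]$, $r\mapsto r^{N+\alpha-1}|v'(r)|^{m-2}v'(r)(a(r)+g(v(r)))^{-\gamma}\in C^1(0,R)$, and $$-\Big(\frac{r^{N+\alpha-1}|v'(r)|^{m-2}v'(r)}{(a(r)+g(v(r)))^\gamma}\Big)'=r^{N+\beta-1}v^p(r),\ 0<r<R,\qquad v'(0)=0,\ v(R)=0.$$ *)

theory Defs
  imports "HOL-Analysis.Analysis"
begin

text \<open>Radial profile \<open>v\<close> (with derivative \<open>v'\<close> on \<open>[0,R]\<close>, one-sided at the endpoints)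
of a positive radial solution on the ball of radius \<open>R\<close> in dimension \<open>N\<close>, in the sense
of the paper: \<open>v > 0\<close> on \<open>[0,R)\<close>, the flux
\<open>r \<mapsto> r^(N+\<alpha>-1) |v'|^(m-2) v' / (a r + g (v r))^\<gamma>\<close> is \<open>C^1\<close> on \<open>(0,R)\<close> and
satisfies \<open>-(flux)' = r^(N+\<beta>-1) v^p\<close> there, \<open>v'(0) = 0\<close>, \<open>v(R) = 0\<close>.
Here \<open>v\<close> is assumed \<open>C^1\<close> on the closed interval \<open>[0,R]\<close>.\<close>

definition radial_flux ::
  "nat \<Rightarrow> real \<Rightarrow> real \<Rightarrow> real \<Rightarrow> (real \<Rightarrow> real) \<Rightarrow> (real \<Rightarrow> real)
   \<Rightarrow> (real \<Rightarrow> real) \<Rightarrow> (real \<Rightarrow> real) \<Rightarrow> real \<Rightarrow> real" where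
  "radial_flux N \<alpha> m \<gamma> a g v v' r =
     r powr (real N + \<alpha> - 1) * (\<bar>v' r\<bar> powr (m - 2) * v' r)
       / (a r + g (v r)) powr \<gamma>"

definition positive_radial_solution_C1 ::
  "nat \<Rightarrow> real \<Rightarrow> real \<Rightarrow> real \<Rightarrow> real \<Rightarrow> real \<Rightarrow> (real \<Rightarrow> real) \<Rightarrow> (real \<Rightarrow> real)
   \<Rightarrow> real \<Rightarrow> (real \<Rightarrow> real) \<Rightarrow> (real \<Rightarrow> real) \<Rightarrow> bool" where
  "positive_radial_solution_C1 N \<alpha> \<beta> m \<gamma> p a g R v v' \<longleftrightarrow>
     (\<forall>r\<in>{0..R}. (v has_real_derivative v' r) (at r within {0..R})) \<and>
     continuous_on {0..R} v' \<and>
     (\<forall>r\<in>{0..<R}. v r > 0) \<and>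
     (\<exists>F'. continuous_on {0<..<R} F' \<and>
        (\<forall>r\<in>{0<..<R}.
           (radial_flux N \<alpha> m \<gamma> a g v v' has_real_derivative F' r) (at r) \<and>
           - F' r = r powr (real N + \<beta> - 1) * v r powr p)) \<and>
     v' 0 = 0 \<and> v R = 0"

end

theory Submission
  imports Defs
begin

lemma abs_powr_deriv:
  fixes q t :: real assumes q: "q > 1"
  shows "((\<lambda>t. \<bar>t\<bar> powr q) has_real_derivative q * sgn t * \<bar>t\<bar> powr (q - 1)) (at t)"
proof (cases "t = 0")
  case True
  have "((\<lambda>y. (\<bar>y\<bar> powr q - \<bar>0\<bar> powr q) / (y - 0)) \<longlongrightarrow> 0) (at (0::real))"
  proof -
    have c: "((\<lambda>y. \<bar>y\<bar> powr (q - 1)) \<longlongrightarrow> \<bar>0\<bar> powr (q-1)) (at (0::real))"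
      using q by (intro tendsto_intros) auto
    have "((\<lambda>y. norm ((\<bar>y\<bar> powr q - \<bar>0\<bar> powr q) / (y - 0))) \<longlongrightarrow> 0) (at (0::real))"
    proof (rule Lim_transform_eventually[OF c[simplified]])
      show "\<forall>\<^sub>F y in at 0. \<bar>y\<bar> powr (q - 1) = norm ((\<bar>y\<bar> powr q - \<bar>0\<bar> powr q) / (y - 0))"
        unfolding eventually_at_filter
        by (auto simp: powr_diff)
    qed
    then show ?thesis by (simp only: tendsto_norm_zero_iff)
  qed
  then show ?thesis using True by (simp add: has_field_derivative_iff)
next
  case False
  show ?thesis
  proof (cases "t > 0")
    case True
    have "((\<lambda>t. t powr q) has_real_derivative q * sgn t * \<bar>t\<bar> powr (q - 1)) (at t)"
      using DERIV_fun_powr[OF DERIV_ident True, of q] True by simp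
    then show ?thesis
      by (rule has_field_derivative_transform_within_open[where S="{0<..}"]) (use True in auto)
  next
    case False
    with \<open>t \<noteq> 0\<close> have t: "t < 0" by simp
    have "((\<lambda>t. (-t) powr q) has_real_derivative q * sgn t * \<bar>t\<bar> powr (q - 1)) (at t)"
      using DERIV_fun_powr[OF DERIV_minus[OF DERIV_ident] , of t q] t by simp
    then show ?thesis
      by (rule has_field_derivative_transform_within_open[where S="{..<0}"]) (use t in auto)
  qed
qed

lemma deriv_interior:
  assumes "(f has_real_derivative f') (at x within S)" "x \<in> interior S"
  shows "(f has_real_derivative f') (at x)"
  using assms(1) unfolding at_within_interior[OF assms(2)] .

lemma pw1:
  fixes z a b :: real assumes "z \<ge> 0" "b = a + 1"
  shows "z powr a * z = z powr b"
  using assms by (simp add: powr_add)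

lemma phi_abs:
  fixes m y :: real assumes "m > 1"
  shows "\<bar>\<bar>y\<bar> powr (m - 2) * y\<bar> = \<bar>y\<bar> powr (m - 1)"
  by (simp add: abs_mult pw1)

lemma phi_mult:
  fixes m y :: real assumes "m > 1"
  shows "\<bar>y\<bar> powr (m - 2) * y * y = \<bar>y\<bar> powr m"
proof -
  have "\<bar>y\<bar> powr (m - 2) * y * y = \<bar>y\<bar> powr (m - 2) * \<bar>y\<bar> * \<bar>y\<bar>"
    by (simp add: abs_mult_self_eq mult.assoc)
  also have "\<dots> = \<bar>y\<bar> powr m" by (simp add: pw1)
  finally show ?thesis .
qed

lemma phi_split:
  fixes m y :: real assumes "m > 1"
  shows "\<bar>y\<bar> powr (m - 2) * y = max y 0 powr (m - 1) - max (- y) 0 powr (m - 1)"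
proof -
  consider "y > 0" | "y = 0" | "y < 0" by linarith
  then show ?thesis
  proof cases
    case 1
    then show ?thesis by (simp add: pw1)
  next
    case 3
    have h: "(-y) powr (m - 2) * (-y) = (-y) powr (m - 1)" using 3 by (intro pw1) auto
    have h2: "(-y) powr (m - 2) * y = - ((-y) powr (m - 1))"
      using h by (metis minus_mult_right minus_minus)
    show ?thesis using h2 3 by (simp add: max_def)
  qed (use assms in simp)
qed

lemma absF:
  fixes m y x d k \<gamma> s :: real assumes "m > 1" "x > 0" "d > 0"
  shows "\<bar>x powr k * (\<bar>y\<bar> powr (m - 2) * y) / d powr \<gamma>\<bar> powr s
       = x powr (k * s) * \<bar>y\<bar> powr ((m - 1) * s) / d powr (\<gamma> * s)"
proof -
  have "\<bar>x powr k * (\<bar>y\<bar> powr (m - 2) * y) / d powr \<gamma>\<bar> = x powr k * \<bar>y\<bar> powr (m - 1) / d powr \<gamma>"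
    using phi_abs[OF assms(1), of y] by (simp add: abs_mult)
  also have "\<dots> powr s = (x powr k * \<bar>y\<bar> powr (m - 1)) powr s / (d powr \<gamma>) powr s"
    by (rule powr_divide)
  also have "\<dots> = x powr (k * s) * \<bar>y\<bar> powr ((m - 1) * s) / d powr (\<gamma> * s)"
    by (simp add: powr_mult powr_powr)
  finally show ?thesis .
qed

lemma sgnF:
  fixes m y x d k \<gamma> :: real assumes "m > 1" "x > 0" "d > 0"
  shows "sgn (x powr k * (\<bar>y\<bar> powr (m - 2) * y) / d powr \<gamma>) = sgn y"
  using assms by (cases "y = 0") (auto simp: sgn_mult)

lemma combine:
  fixes t q B Ae Q C1 G XF Z T S P U c :: real
  assumes "t * q = 1" "t * B = G" "t * Ae + Q = C1" "XF = - Z"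
  shows "t * (Ae * T + q * XF + B * S) + (Q * P + Z) + Q * (- P + c * U + T) = C1 * T + G * S + Q * c * U"
  using assms by algebra

lemma keyG:
  fixes m y x d k \<gamma> q B Ae e Dp :: real
  assumes m: "m > 1" and x: "x > 0" and d: "d > 0"
    and q: "q = m / (m - 1)" and B: "B = \<gamma> / (m - 1)" and Ae: "Ae = e + 1 - k * q"
  defines "F \<equiv> x powr k * (\<bar>y\<bar> powr (m - 2) * y) / d powr \<gamma>"
  shows "x powr (Ae - 1) * \<bar>F\<bar> powr q * d powr B = x powr e * \<bar>y\<bar> powr m / d powr \<gamma>"
    and "sgn F * \<bar>F\<bar> powr (q - 1) * x powr Ae * d powr B = x powr (e + 1 - k) * y"
    and "d powr (B - 1) * Dp * x powr Ae * \<bar>F\<bar> powr q = x powr (e + 1) * \<bar>y\<bar> powr m * Dp / d powr (\<gamma> + 1)"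
    and "x powr Ae * \<bar>F\<bar> powr q * d powr B = x powr (e + 1) * \<bar>y\<bar> powr m / d powr \<gamma>"
proof -
  have mq: "(m - 1) * q = m" using m q by (simp add: field_simps)
  have q1: "(m - 1) * (q - 1) = 1" using m q by (simp add: field_simps)
  have Fq: "\<bar>F\<bar> powr q = x powr (k * q) * \<bar>y\<bar> powr m / d powr (\<gamma> * q)"
    unfolding F_def using absF[OF m x d, of k y \<gamma> q] mq by simp
  have Fq1: "\<bar>F\<bar> powr (q - 1) = x powr (k * (q - 1)) * \<bar>y\<bar> / d powr (\<gamma> * (q - 1))"
    unfolding F_def using absF[OF m x d, of k y \<gamma> "q - 1"] q1 by simp
  have sF: "sgn F = sgn y" unfolding F_def using sgnF[OF m x d] .
  have dB: "d powr B = d powr (\<gamma> * q) / d powr \<gamma>"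
  proof -
    have "B = \<gamma> * q - \<gamma>" using m by (simp add: q B field_simps)
    then show ?thesis by (simp add: powr_diff)
  qed
  have dB1: "d powr (B - 1) = d powr (\<gamma> * q) / d powr (\<gamma> + 1)"
  proof -
    have e: "B - 1 = \<gamma> * q - (\<gamma> + 1)" using m by (simp add: q B field_simps)
    show ?thesis unfolding e by (rule powr_diff)
  qed
  have dB2: "d powr B = d powr (\<gamma> * (q - 1))"
  proof -
    have "B = \<gamma> * (q - 1)" using m by (simp add: q B field_simps)
    then show ?thesis by simp
  qed
  have x1: "x powr (Ae - 1) * x powr (k * q) = x powr e"
  proof -
    have "Ae - 1 + k * q = e" using Ae by simp
    then show ?thesis by (simp add: powr_add[symmetric])
  qed
  have x2: "x powr Ae * x powr (k * q) = x powr (e + 1)"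
  proof -
    have "Ae + k * q = e + 1" using Ae by simp
    then show ?thesis by (simp add: powr_add[symmetric])
  qed
  have x3: "x powr (k * (q - 1)) * x powr Ae = x powr (e + 1 - k)"
  proof -
    have "k * (q - 1) + Ae = e + 1 - k" using Ae by (simp add: algebra_simps)
    then show ?thesis by (simp add: powr_add[symmetric])
  qed
  have dpos: "d powr (\<gamma> * q) > 0" "d powr \<gamma> > 0" "d powr (\<gamma> + 1) > 0" using d by auto
  show "x powr (Ae - 1) * \<bar>F\<bar> powr q * d powr B = x powr e * \<bar>y\<bar> powr m / d powr \<gamma>"
    unfolding Fq dB using dpos x1[symmetric] by (simp add: field_simps)
  show "x powr Ae * \<bar>F\<bar> powr q * d powr B = x powr (e + 1) * \<bar>y\<bar> powr m / d powr \<gamma>"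
    unfolding Fq dB using dpos x2[symmetric] by (simp add: field_simps)
  show "d powr (B - 1) * Dp * x powr Ae * \<bar>F\<bar> powr q = x powr (e + 1) * \<bar>y\<bar> powr m * Dp / d powr (\<gamma> + 1)"
    unfolding Fq dB1 using dpos x2[symmetric] by (simp add: field_simps)
  have "sgn F * \<bar>F\<bar> powr (q - 1) * x powr Ae * d powr B
      = (sgn y * \<bar>y\<bar>) * (x powr (k * (q - 1)) * x powr Ae) * (d powr (\<gamma> * (q - 1)) / d powr (\<gamma> * (q - 1)))"
    unfolding sF Fq1 dB2 by (simp add: field_simps)
  also have "\<dots> = x powr (e + 1 - k) * y" using d by (simp add: x3 sgn_mult_abs)
  finally show "sgn F * \<bar>F\<bar> powr (q - 1) * x powr Ae * d powr B = x powr (e + 1 - k) * y" .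
qed

theorem proposition8p1:
  fixes N :: nat and R m p \<gamma> \<alpha> \<beta> c1 c2 \<sigma> :: real
    and a a' g g' v v' :: "real \<Rightarrow> real"
  assumes "N \<ge> 1" and "R > 0" and "m > 1" and "real N > m" and "p > 1"
    and "0 < \<gamma>" and "\<gamma> < m - 1"
    and "real N + \<alpha> - m > 0" and "\<beta> - \<alpha> + 1 > 0"
    and "\<forall>r\<in>{0..}. (a has_real_derivative a' r) (at r within {0..})"
    and "continuous_on {0..} a'"
    and "0 < c1" and "c1 \<le> c2" and "\<forall>r\<in>{0..}. c1 \<le> a r \<and> a r \<le> c2"
    and "\<forall>s\<in>{0..}. (g has_real_derivative g' s) (at s within {0..})"
    and "continuous_on {0..} g'"
    and "\<forall>s\<in>{0..}. g s \<ge> 0"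
    and "mono_on {0..} g"
    and "positive_radial_solution_C1 N \<alpha> \<beta> m \<gamma> p a g R v v'"
    and "-(real N + \<alpha> - m) < \<sigma>" and "\<sigma> \<le> m - 1"
  shows "(let D = (\<lambda>r. a r + g (v r)) in
     (\<sigma> - m + 2 - (real N + \<alpha> - m + 1 + \<sigma>) / m + (real N + \<beta> + 1 + \<sigma> - m) / (p + 1))
       * integral {0..R} (\<lambda>r. r powr (real N + \<alpha> - m + \<sigma>) * \<bar>v' r\<bar> powr m / D r powr \<gamma>)
     = (m - 1) / m * (R powr (real N + \<alpha> - m + 1 + \<sigma>) * \<bar>v' R\<bar> powr m
                       / (a R + g 0) powr \<gamma>)
       - \<gamma> / m * integral {0..R} (\<lambda>r. r powr (real N + \<alpha> - m + 1 + \<sigma>) * \<bar>v' r\<bar> powr m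
                                        * a' r / D r powr (\<gamma> + 1))
       - \<gamma> / m * integral {0..R} (\<lambda>r. r powr (real N + \<alpha> - m + 1 + \<sigma>) * \<bar>v' r\<bar> powr m
                                        * v' r * g' (v r) / D r powr (\<gamma> + 1))
       - (real N + \<beta> + 1 + \<sigma> - m) / (p + 1) * (\<sigma> - m + 1)
         * integral {0..R} (\<lambda>r. r powr (real N + \<alpha> + \<sigma> - m - 1) * \<bar>v' r\<bar> powr (m - 2)
                                  * v' r * v r / D r powr \<gamma>))"
proof -
  note H = assms(19)[unfolded positive_radial_solution_C1_def]
  have vder: "\<forall>r\<in>{0..R}. (v has_real_derivative v' r) (at r within {0..R})"
    by (rule conjunct1[OF H])
  have v'c: "continuous_on {0..R} v'" by (rule conjunct1[OF conjunct2[OF H]])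
  have vpos: "\<forall>r\<in>{0..<R}. v r > 0" by (rule conjunct1[OF conjunct2[OF conjunct2[OF H]]])
  have H4: "\<exists>F'. continuous_on {0<..<R} F' \<and>
        (\<forall>r\<in>{0<..<R}.
           (radial_flux N \<alpha> m \<gamma> a g v v' has_real_derivative F' r) (at r) \<and>
           - F' r = r powr (real N + \<beta> - 1) * v r powr p)"
    by (rule conjunct1[OF conjunct2[OF conjunct2[OF conjunct2[OF H]]]])
  have vR: "v R = 0" by (rule conjunct2[OF conjunct2[OF conjunct2[OF conjunct2[OF conjunct2[OF H]]]]])
  from H4 obtain Fp where Fp: "continuous_on {0<..<R} Fp \<and>
        (\<forall>r\<in>{0<..<R}.
           (radial_flux N \<alpha> m \<gamma> a g v v' has_real_derivative Fp r) (at r) \<and>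
           - Fp r = r powr (real N + \<beta> - 1) * v r powr p)" by (rule exE)
  have Fder: "\<forall>r\<in>{0<..<R}. (radial_flux N \<alpha> m \<gamma> a g v v' has_real_derivative Fp r) (at r) \<and>
           - Fp r = r powr (real N + \<beta> - 1) * v r powr p" by (rule conjunct2[OF Fp])
  define F where "F = radial_flux N \<alpha> m \<gamma> a g v v'"
  define D where "D = (\<lambda>r. a r + g (v r))"
  have Dr: "\<And>r. a r + g (v r) = D r" by (simp add: D_def)
  define k where "k = real N + \<alpha> - 1"
  define e where "e = real N + \<alpha> - m + \<sigma>"
  define q where "q = m / (m - 1)"
  define Ae where "Ae = e + 1 - k * q"
  define B where "B = \<gamma> / (m - 1)"
  define c where "c = \<sigma> - m + 1"
  define b where "b = \<sigma> - m + 2"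
  define E1 where "E1 = real N + \<beta> + 1 + \<sigma> - m"
  define Q where "Q = E1 / (p + 1)"
  define C1 where "C1 = \<sigma> - m + 2 - (real N + \<alpha> - m + 1 + \<sigma>) / m + (real N + \<beta> + 1 + \<sigma> - m) / (p + 1)"
  define T where "T = (\<lambda>r. r powr (real N + \<alpha> - m + \<sigma>) * \<bar>v' r\<bar> powr m / D r powr \<gamma>)"
  define Sa where "Sa = (\<lambda>r. r powr (real N + \<alpha> - m + 1 + \<sigma>) * \<bar>v' r\<bar> powr m * a' r / D r powr (\<gamma> + 1))"
  define Sg where "Sg = (\<lambda>r. r powr (real N + \<alpha> - m + 1 + \<sigma>) * \<bar>v' r\<bar> powr m * v' r * g' (v r) / D r powr (\<gamma> + 1))"
  define U where "U = (\<lambda>r. r powr (real N + \<alpha> + \<sigma> - m - 1) * \<bar>v' r\<bar> powr (m - 2) * v' r * v r / D r powr \<gamma>)"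
  define P where "P = (\<lambda>r. r powr (real N + \<beta> + \<sigma> - m) * v r powr (p + 1))"
  define phi where "phi = (\<lambda>y::real. max y 0 powr (m - 1) - max (- y) 0 powr (m - 1))"
  define W where "W = (\<lambda>r. (m - 1) / m * (r powr (e + 1) * \<bar>v' r\<bar> powr m / D r powr \<gamma>)
     + r powr E1 * v r powr (p + 1) / (p + 1) + Q * (r powr e * phi (v' r) * v r / D r powr \<gamma>))"
  define W' where "W' = (\<lambda>r. C1 * T r + \<gamma> / m * (Sa r + Sg r) + Q * c * U r)"
  have m0: "m > 0" using assms(3) by linarith
  have e0: "e > 0" unfolding e_def using assms(20) by linarith
  have E10: "E1 > 0" unfolding E1_def using assms(9,20) by linarith
  have vc: "continuous_on {0..R} v" using vder by (intro DERIV_continuous_on) auto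
  have vnn: "\<forall>r\<in>{0..R}. v r \<ge> 0"
  proof
    fix r assume r: "r \<in> {0..R}"
    show "v r \<ge> 0"
    proof (cases "r = R")
      case True then show ?thesis using vR by simp
    next
      case False then have "r \<in> {0..<R}" using r by auto
      then show ?thesis using vpos by (auto intro: less_imp_le)
    qed
  qed
  have ac: "continuous_on {0..R} a"
    using assms(10) by (intro DERIV_continuous_on continuous_on_subset[of "{0..}"]) auto
  have gc: "continuous_on {0..} g"
    using assms(15) by (intro DERIV_continuous_on) auto
  have gvc: "continuous_on {0..R} (\<lambda>r. g (v r))"
    by (rule continuous_on_compose2[OF gc vc]) (use vnn in auto)
  have Dc: "continuous_on {0..R} D" unfolding D_def by (intro continuous_intros ac gvc)
  have Dpos: "\<forall>r\<in>{0..R}. D r > 0"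
  proof
    fix r assume r: "r \<in> {0..R}"
    then have "a r \<ge> c1" "g (v r) \<ge> 0" using assms(14,17) vnn by auto
    then show "D r > 0" using assms(12) by (simp add: D_def)
  qed
  have a'c: "continuous_on {0..R} a'" using assms(11) by (rule continuous_on_subset) auto
  have g'vc: "continuous_on {0..R} (\<lambda>r. g' (v r))"
    by (rule continuous_on_compose2[OF assms(16) vc]) (use vnn in auto)
  have rp: "\<And>s. s > 0 \<Longrightarrow> continuous_on {0..R} (\<lambda>r. r powr s)"
    by (intro continuous_on_powr' continuous_intros) auto
  have vp: "\<And>s. s > 0 \<Longrightarrow> continuous_on {0..R} (\<lambda>r. \<bar>v' r\<bar> powr s)"
    by (intro continuous_on_powr' continuous_intros v'c) auto
  have vvp: "\<And>s. s > 0 \<Longrightarrow> continuous_on {0..R} (\<lambda>r. v r powr s)"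
    using vnn by (intro continuous_on_powr' continuous_intros vc) auto
  have Dp: "\<And>s. continuous_on {0..R} (\<lambda>r. D r powr s)"
    using Dpos by (intro continuous_on_powr continuous_intros Dc) auto
  have phic: "continuous_on UNIV phi"
    unfolding phi_def using assms(3) by (intro continuous_on_powr' continuous_intros) auto
  have phivc: "continuous_on {0..R} (\<lambda>r. phi (v' r))"
    by (rule continuous_on_compose2[OF phic v'c]) auto
  have Dne: "\<forall>r\<in>{0..R}. D r powr s \<noteq> 0" for s using Dpos by auto
  have Tc: "continuous_on {0..R} T" unfolding T_def
    using m0 assms(5) e0 Dne by (intro continuous_on_mult continuous_on_divide rp vp Dp) (auto simp: e_def)
  have Sac: "continuous_on {0..R} Sa" unfolding Sa_def
    using m0 assms(5) e0 Dne by (intro continuous_on_mult continuous_on_divide rp vp Dp a'c) (auto simp: e_def)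
  have Sgc: "continuous_on {0..R} Sg" unfolding Sg_def
    using m0 assms(5) e0 Dne by (intro continuous_on_mult continuous_on_divide rp vp Dp g'vc v'c) (auto simp: e_def)
  have Wc: "continuous_on {0..R} W" unfolding W_def
    using m0 assms(5) e0 E10 Dne
    by (intro continuous_on_add continuous_on_mult continuous_on_divide rp vp Dp continuous_on_const
        vvp phivc vc) auto
  have iT: "T integrable_on {0..R}" by (rule integrable_continuous_interval[OF Tc])
  have iSa: "Sa integrable_on {0..R}" by (rule integrable_continuous_interval[OF Sac])
  have iSg: "Sg integrable_on {0..R}" by (rule integrable_continuous_interval[OF Sgc])
  have Fform: "\<And>x. F x = x powr k * (\<bar>v' x\<bar> powr (m - 2) * v' x) / D x powr \<gamma>"
    by (simp add: F_def radial_flux_def k_def D_def)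
  have q1: "q > 1" using assms(3) by (simp add: q_def field_simps)
  define W2 where "W2 = (\<lambda>x. (m - 1) / m * (x powr Ae * \<bar>F x\<bar> powr q * D x powr B)
     + x powr E1 * v x powr (p + 1) / (p + 1) + Q * (F x * x powr c * v x))"
  have W2eq: "W2 x = W x" if x: "x \<in> {0<..<R}" for x
  proof -
    have x0: "x > 0" and dx: "D x > 0" using x Dpos by auto
    have g1: "x powr Ae * \<bar>F x\<bar> powr q * D x powr B = x powr (e + 1) * \<bar>v' x\<bar> powr m / D x powr \<gamma>"
      unfolding Fform by (rule keyG(4)[OF assms(3) x0 dx q_def B_def Ae_def])
    have "F x * x powr c * v x = (x powr k * x powr c) * (\<bar>v' x\<bar> powr (m - 2) * v' x) * v x / D x powr \<gamma>"
      unfolding Fform by (simp add: field_simps)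
    also have "x powr k * x powr c = x powr e"
    proof -
      have kc: "k + c = e" by (simp add: k_def c_def e_def)
      show ?thesis by (subst powr_add[symmetric]) (simp only: kc)
    qed
    also have "\<bar>v' x\<bar> powr (m - 2) * v' x = phi (v' x)"
      unfolding phi_def by (rule phi_split[OF assms(3)])
    finally have g2: "F x * x powr c * v x = x powr e * phi (v' x) * v x / D x powr \<gamma>" .
    show ?thesis unfolding W2_def W_def g1 g2 ..
  qed
  have Wd: "(W has_real_derivative W' r) (at r)" if r: "r \<in> {0<..<R}" for r
  proof -
    have r0: "r > 0" and rR: "r < R" using r by auto
    have Dr0: "D r > 0" using Dpos r by auto
    have vr0: "v r > 0" using vpos r by auto
    have vd: "(v has_real_derivative v' r) (at r)"
    proof -
      have "(v has_real_derivative v' r) (at r within {0..R})" using vder r by auto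
      moreover have "at r within {0..R} = at r" using r by (intro at_within_interior) auto
      ultimately show ?thesis by simp
    qed
    have ad: "(a has_real_derivative a' r) (at r)"
      using assms(10) r0 by (intro deriv_interior[where S="{0..}"]) auto
    have gd: "(g has_real_derivative g' (v r)) (at (v r))"
      using assms(15) vr0 by (intro deriv_interior[where S="{0..}"]) auto
    have Dd: "(D has_real_derivative a' r + g' (v r) * v' r) (at r)"
      unfolding D_def by (intro DERIV_add ad DERIV_chain2[OF gd vd])
    have Fd: "(F has_real_derivative Fp r) (at r)" using Fder r unfolding F_def by blast
    have Fpe0: "- Fp r = r powr (real N + \<beta> - 1) * v r powr p" using Fder r by blast
    then have Fpe: "Fp r = - (r powr (real N + \<beta> - 1) * v r powr p)" by linarith
    have pw: "\<And>s. ((\<lambda>x. x powr s) has_real_derivative s * r powr (s - 1)) (at r)"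
      using DERIV_fun_powr[OF DERIV_ident r0] by simp
    define y where "y = v' r"
    define Dp where "Dp = a' r + g' (v r) * v' r"
    have Fr: "F r = r powr k * (\<bar>y\<bar> powr (m - 2) * y) / D r powr \<gamma>" unfolding y_def by (rule Fform)
    have K1: "r powr (Ae - 1) * \<bar>F r\<bar> powr q * D r powr B = r powr e * \<bar>y\<bar> powr m / D r powr \<gamma>"
      unfolding Fr by (rule keyG(1)[OF assms(3) r0 Dr0 q_def B_def Ae_def])
    have K2: "sgn (F r) * \<bar>F r\<bar> powr (q - 1) * r powr Ae * D r powr B = r powr (e + 1 - k) * y"
      unfolding Fr by (rule keyG(2)[OF assms(3) r0 Dr0 q_def B_def Ae_def])
    have K3: "D r powr (B - 1) * Dp * r powr Ae * \<bar>F r\<bar> powr q = r powr (e + 1) * \<bar>y\<bar> powr m * Dp / D r powr (\<gamma> + 1)"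
      unfolding Fr by (rule keyG(3)[OF assms(3) r0 Dr0 q_def B_def Ae_def])
    have bexp: "e + 1 - k = b" by (simp add: e_def k_def b_def)
    have ee: "e + 1 = real N + \<alpha> - m + 1 + \<sigma>" "e = real N + \<alpha> - m + \<sigma>" by (simp_all add: e_def)
    have SS: "r powr (e + 1) * \<bar>y\<bar> powr m * Dp / D r powr (\<gamma> + 1) = Sa r + Sg r"
      unfolding Sa_def Sg_def Dp_def y_def ee by (simp add: algebra_simps add_divide_distrib)
    have TT: "r powr e * \<bar>y\<bar> powr m / D r powr \<gamma> = T r" unfolding T_def y_def ee ..
    have d2: "((\<lambda>x. \<bar>F x\<bar> powr q) has_real_derivative q * sgn (F r) * \<bar>F r\<bar> powr (q - 1) * Fp r) (at r)"
      by (rule DERIV_chain2[OF abs_powr_deriv[OF q1] Fd])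
    have d3: "((\<lambda>x. D x powr B) has_real_derivative B * D r powr (B - 1) * Dp) (at r)"
      using DERIV_fun_powr[OF Dd Dr0, of B] by (simp add: Dp_def)
    have dG: "((\<lambda>x. x powr Ae * \<bar>F x\<bar> powr q * D x powr B) has_real_derivative
        Ae * T r + q * (r powr b * y * Fp r) + B * (Sa r + Sg r)) (at r)"
    proof (rule DERIV_cong[OF DERIV_mult[OF DERIV_mult[OF pw d2] d3]])
      have "(Ae * r powr (Ae - 1) * \<bar>F r\<bar> powr q + q * sgn (F r) * \<bar>F r\<bar> powr (q - 1) * Fp r * r powr Ae) * D r powr B +
          B * D r powr (B - 1) * Dp * (r powr Ae * \<bar>F r\<bar> powr q)
        = Ae * (r powr (Ae - 1) * \<bar>F r\<bar> powr q * D r powr B)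
          + q * Fp r * (sgn (F r) * \<bar>F r\<bar> powr (q - 1) * r powr Ae * D r powr B)
          + B * (D r powr (B - 1) * Dp * r powr Ae * \<bar>F r\<bar> powr q)"
        by (simp only: algebra_simps)
      also have "\<dots> = Ae * T r + q * (r powr b * y * Fp r) + B * (Sa r + Sg r)"
        unfolding K1 K2 K3 bexp TT SS by (simp only: algebra_simps)
      finally show "(Ae * r powr (Ae - 1) * \<bar>F r\<bar> powr q + q * sgn (F r) * \<bar>F r\<bar> powr (q - 1) * Fp r * r powr Ae) * D r powr B +
          B * D r powr (B - 1) * Dp * (r powr Ae * \<bar>F r\<bar> powr q)
        = Ae * T r + q * (r powr b * y * Fp r) + B * (Sa r + Sg r)" .
    qed
    have d4: "((\<lambda>x. v x powr (p + 1)) has_real_derivative (p + 1) * v r powr p * v' r) (at r)"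
      using DERIV_fun_powr[OF vd vr0, of "p + 1"] by simp
    have dZ: "((\<lambda>x. x powr E1 * v x powr (p + 1) / (p + 1)) has_real_derivative
        Q * P r + r powr E1 * v r powr p * y) (at r)"
    proof (rule DERIV_cong[OF DERIV_cdivide[OF DERIV_mult[OF pw d4]]])
      have e1: "E1 - 1 = real N + \<beta> + \<sigma> - m" by (simp add: E1_def)
      show "(E1 * r powr (E1 - 1) * v r powr (p + 1) + (p + 1) * v r powr p * v' r * r powr E1) / (p + 1)
          = Q * P r + r powr E1 * v r powr p * y"
        unfolding P_def Q_def e1 y_def using assms(5) by (simp add: field_simps)
    qed
    have k1: "Fp r * r powr c * v r = - P r"
    proof -
      have ex: "real N + \<beta> - 1 + c = real N + \<beta> + \<sigma> - m" by (simp add: c_def)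
      have x: "r powr (real N + \<beta> - 1) * r powr c = r powr (real N + \<beta> + \<sigma> - m)"
        by (subst powr_add[symmetric]) (simp only: ex)
      have yy: "v r powr p * v r = v r powr (p + 1)" by (rule pw1) (use vr0 in auto)
      have "Fp r * r powr c * v r = - ((r powr (real N + \<beta> - 1) * r powr c) * (v r powr p * v r))"
        unfolding Fpe by (simp only: algebra_simps)
      also have "\<dots> = - P r" unfolding x yy P_def ..
      finally show ?thesis .
    qed
    have k2: "c * r powr (c - 1) * F r * v r = c * U r"
    proof -
      have ex: "k + (c - 1) = real N + \<alpha> + \<sigma> - m - 1" by (simp add: c_def k_def)
      have x: "r powr k * r powr (c - 1) = r powr (real N + \<alpha> + \<sigma> - m - 1)"
        by (subst powr_add[symmetric]) (simp only: ex)
      have "c * r powr (c - 1) * F r * v r = c * ((r powr k * r powr (c - 1)) * \<bar>y\<bar> powr (m - 2) * y * v r / D r powr \<gamma>)"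
        unfolding Fr by (simp add: field_simps)
      also have "\<dots> = c * U r" unfolding x U_def y_def ..
      finally show ?thesis .
    qed
    have k3: "v' r * (F r * r powr c) = T r"
    proof -
      have ex: "k + c = real N + \<alpha> - m + \<sigma>" by (simp add: c_def k_def)
      have x: "r powr k * r powr c = r powr (real N + \<alpha> - m + \<sigma>)"
        by (subst powr_add[symmetric]) (simp only: ex)
      have "v' r * (F r * r powr c) = (r powr k * r powr c) * (\<bar>y\<bar> powr (m - 2) * y * y) / D r powr \<gamma>"
        unfolding Fr y_def by (simp add: field_simps)
      also have "\<dots> = T r" unfolding x phi_mult[OF assms(3)] T_def y_def ..
      finally show ?thesis .
    qed
    have dK: "((\<lambda>x. F x * x powr c * v x) has_real_derivative - P r + c * U r + T r) (at r)"
    proof (rule DERIV_cong[OF DERIV_mult[OF DERIV_mult[OF Fd pw] vd]])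
      have "(Fp r * r powr c + c * r powr (c - 1) * F r) * v r + v' r * (F r * r powr c)
          = Fp r * r powr c * v r + c * r powr (c - 1) * F r * v r + v' r * (F r * r powr c)"
        by (simp only: algebra_simps)
      also have "\<dots> = - P r + c * U r + T r" unfolding k1 k2 k3 ..
      finally show "(Fp r * r powr c + c * r powr (c - 1) * F r) * v r + v' r * (F r * r powr c)
          = - P r + c * U r + T r" .
    qed
    have dW2: "(W2 has_real_derivative (m - 1) / m * (Ae * T r + q * (r powr b * y * Fp r) + B * (Sa r + Sg r))
        + (Q * P r + r powr E1 * v r powr p * y) + Q * (- P r + c * U r + T r)) (at r)"
      unfolding W2_def by (intro DERIV_add DERIV_cmult dG dZ dK)
    have bF: "r powr b * y * Fp r = - (r powr E1 * v r powr p * y)"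
    proof -
      have ex: "b + (real N + \<beta> - 1) = E1" by (simp add: b_def E1_def)
      have x: "r powr b * r powr (real N + \<beta> - 1) = r powr E1"
        by (subst powr_add[symmetric]) (simp only: ex)
      have "r powr b * y * Fp r = - ((r powr b * r powr (real N + \<beta> - 1)) * v r powr p * y)"
        unfolding Fpe by (simp only: algebra_simps)
      then show ?thesis unfolding x .
    qed
    have h1: "(m - 1) / m * q = 1" unfolding q_def using assms(3) by (simp add: field_simps)
    have h2: "(m - 1) / m * B = \<gamma> / m" unfolding B_def using assms(3) by (simp add: field_simps)
    have h3: "(m - 1) / m * Ae + Q = C1"
      unfolding Ae_def q_def e_def k_def C1_def Q_def E1_def using assms(3) by (simp add: field_simps)
    have eqW: "(m - 1) / m * (Ae * T r + q * (r powr b * y * Fp r) + B * (Sa r + Sg r))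
        + (Q * P r + r powr E1 * v r powr p * y) + Q * (- P r + c * U r + T r) = W' r"
      unfolding W'_def by (rule combine[OF h1 h2 h3 bF])
    show ?thesis
      using dW2[unfolded eqW] by (rule has_field_derivative_transform_within_open[where S="{0<..<R}"])
        (use r W2eq in auto)
  qed
  have FTC: "(W' has_integral (W R - W 0)) {0..R}"
    using Wc Wd assms(2)
    by (intro fundamental_theorem_of_calculus_interior) (auto simp: has_real_derivative_iff_has_vector_derivative[symmetric])
  have W0: "W 0 = 0" unfolding W_def using e0 E10 by simp
  have DR: "D R = a R + g 0" by (simp add: D_def vR)
  have WR: "W R = (m - 1) / m * (R powr (e + 1) * \<bar>v' R\<bar> powr m / D R powr \<gamma>)"
    unfolding W_def using vR by simp
  have intW': "integral {0..R} W' = C1 * integral {0..R} T + \<gamma> / m * integral {0..R} Sa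
      + \<gamma> / m * integral {0..R} Sg + Q * c * integral {0..R} U"
  proof (cases "Q * c = 0")
    case True
    then have "W' = (\<lambda>r. C1 * T r + (\<gamma> / m * Sa r + \<gamma> / m * Sg r))"
      by (auto simp: W'_def algebra_simps)
    moreover have "((\<lambda>r. C1 * T r + (\<gamma> / m * Sa r + \<gamma> / m * Sg r)) has_integral
        C1 * integral {0..R} T + (\<gamma> / m * integral {0..R} Sa + \<gamma> / m * integral {0..R} Sg)) {0..R}"
      using iT iSa iSg by (intro has_integral_add has_integral_mult_right integrable_integral)
    ultimately show ?thesis using True by (simp add: integral_unique)
  next
    case False
    have Ueq: "U = (\<lambda>r. (1 / (Q * c)) * (W' r - (C1 * T r + (\<gamma> / m * Sa r + \<gamma> / m * Sg r))))"
      using False m0 by (intro ext) (simp add: W'_def field_simps)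
    have iW': "W' integrable_on {0..R}" using FTC by blast
    have iU: "U integrable_on {0..R}" unfolding Ueq
      using iW' iT iSa iSg by (intro integrable_on_mult_right integrable_diff integrable_add) auto
    have "W' = (\<lambda>r. C1 * T r + (\<gamma> / m * Sa r + (\<gamma> / m * Sg r + Q * c * U r)))"
      by (auto simp: W'_def algebra_simps)
    moreover have "((\<lambda>r. C1 * T r + (\<gamma> / m * Sa r + (\<gamma> / m * Sg r + Q * c * U r))) has_integral
        C1 * integral {0..R} T + (\<gamma> / m * integral {0..R} Sa + (\<gamma> / m * integral {0..R} Sg
         + Q * c * integral {0..R} U))) {0..R}"
      using iT iSa iSg iU by (intro has_integral_add has_integral_mult_right integrable_integral)
    ultimately show ?thesis by (simp add: integral_unique)
  qed
  have fin: "C1 * integral {0..R} T = (m - 1) / m * (R powr (e + 1) * \<bar>v' R\<bar> powr m / D R powr \<gamma>)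
      - \<gamma> / m * integral {0..R} Sa - \<gamma> / m * integral {0..R} Sg - Q * c * integral {0..R} U"
    using intW' FTC W0 WR by (simp add: integral_unique)
  have ee: "e + 1 = real N + \<alpha> - m + 1 + \<sigma>" by (simp add: e_def)
  show ?thesis
    unfolding Let_def Dr
    unfolding T_def[symmetric] Sa_def[symmetric] Sg_def[symmetric] U_def[symmetric]
    using fin unfolding DR ee C1_def Q_def E1_def c_def by simp
qed

end
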